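(* For any quantum automaton $\mathcal{A}=(\mathcal{H},|s_0\rangle,\Sigma,\{U_\sigma\},F)$ and any $w\in\Sigma^\omega$, $f^{\mathrm{ND}}_{\mathcal{A}}(w)=f^{\mathrm{IR}}_{\mathcal{A}}(w)$.
   Context: A quantum automaton is a tuple $\mathcal{A}=(\mathcal{H},|s_0\rangle,\Sigma,\{U_\sigma:\sigma\in\Sigma\},F)$ where $\mathcal{H}$ is a finite-dimensional complex Hilbert space, $|s_0\rangle$ a unit vector, $\Sigma$ a finite alphabet, each $U_\sigma$ unitary, and $F$ a subspace with orthogonal projection $P_F$. For $w=\sigma_1\sigma_2\cdots\in\Sigma^\omega$ the non-disturbing run is $|s_n\rangle=U_{\sigma_n}\cdots U_{\sigma_1}|s_0\rangle$. Define $$f^{\mathrm{ND}}_{\mathcal{A}}(w)=\sup_{|\psi\rangle\in F,\||\psi\rangle\|=1}\sup_{\{n_i\}}\inf_{i\ge1}|\langle\psi|s_{n_i}\rangle|^2,\qquad f^{\mathrm{IR}}_{\mathcal{A}}(w)=\sup_{\{n_i\}}\inf_{i\ge1}\|P_F|s_{n_i}\rangle\|^2,$$ where $\{n_i\}$ ranges over strictly increasing sequences $0\le n_1<n_2<\cdots$ of natural numbers. *)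

theory Defs
  imports "HOL-Analysis.Analysis"
begin

text \<open>The finite-dimensional complex Hilbert space is modelled as complex^'n
  for a finite index type 'n, with the standard inner product (conjugate-linear in
  the first argument).\<close>

definition cinner :: "complex^'n \<Rightarrow> complex^'n \<Rightarrow> complex" where
  "cinner x y = (\<Sum>i\<in>UNIV. cnj (x$i) * y$i)"

definition adjoint_mat :: "complex^'n^'n \<Rightarrow> complex^'n^'n" where
  "adjoint_mat M = (\<chi> i j. cnj (M$j$i))"

definition unitary_mat :: "complex^'n^'n \<Rightarrow> bool" where
  "unitary_mat U \<longleftrightarrow> U ** adjoint_mat U = mat 1 \<and> adjoint_mat U ** U = mat 1"

definition csubspace :: "(complex^'n) set \<Rightarrow> bool" where
  "csubspace F \<longleftrightarrow> 0 \<in> F \<and> (\<forall>x\<in>F. \<forall>y\<in>F. x + y \<in> F) \<and> (\<forall>c. \<forall>x\<in>F. c *s x \<in> F)"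

definition proj :: "(complex^'n) set \<Rightarrow> complex^'n \<Rightarrow> complex^'n" where
  "proj F x = (THE p. p \<in> F \<and> (\<forall>y\<in>F. cinner y (x - p) = 0))"

primrec run :: "('s \<Rightarrow> complex^'n^'n) \<Rightarrow> complex^'n \<Rightarrow> (nat \<Rightarrow> 's) \<Rightarrow> nat \<Rightarrow> complex^'n" where
  "run U s0 w 0 = s0"
| "run U s0 w (Suc n) = U (w n) *v run U s0 w n"

text \<open>Values are taken in ennreal (complete lattice, Sup of the empty set is 0).
  Strictly increasing index sequences n_1 < n_2 < ... are strict_mono functions nat \<Rightarrow> nat.\<close>
definition f_ND :: "('s \<Rightarrow> complex^'n^'n) \<Rightarrow> complex^'n \<Rightarrow> (complex^'n) set \<Rightarrow> (nat \<Rightarrow> 's) \<Rightarrow> ennreal" where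
  "f_ND U s0 F w =
     (SUP \<psi>\<in>{\<psi>. \<psi> \<in> F \<and> norm \<psi> = 1}. SUP r\<in>{r::nat\<Rightarrow>nat. strict_mono r}.
        INF i. ennreal ((cmod (cinner \<psi> (run U s0 w (r i))))\<^sup>2))"

definition f_IR :: "('s \<Rightarrow> complex^'n^'n) \<Rightarrow> complex^'n \<Rightarrow> (complex^'n) set \<Rightarrow> (nat \<Rightarrow> 's) \<Rightarrow> ennreal" where
  "f_IR U s0 F w =
     (SUP r\<in>{r::nat\<Rightarrow>nat. strict_mono r}.
        INF i. ennreal ((norm (proj F (run U s0 w (r i))))\<^sup>2))"

end

theory Submission
  imports Defs
begin

lemma cinner_re: "Re (cinner x y) = inner x y"
  unfolding cinner_def inner_vec_def inner_complex_def by (simp add: Re_sum)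

lemma cinner_self: "cinner x x = complex_of_real ((norm x)^2)"
proof -
  have "cinner x x = (\<Sum>i\<in>UNIV. complex_of_real ((cmod (x$i))^2))"
    unfolding cinner_def by (intro sum.cong refl) (metis complex_norm_square mult.commute)
  also have "\<dots> = complex_of_real ((norm x)^2)"
    by (simp add: norm_vec_def L2_set_def sum_nonneg)
  finally show ?thesis .
qed

lemma cinner_diff_right: "cinner x (y - z) = cinner x y - cinner x z"
  unfolding cinner_def by (simp add: algebra_simps sum_subtractf)

lemma cinner_add_right: "cinner x (y + z) = cinner x y + cinner x z"
  unfolding cinner_def by (simp add: algebra_simps sum.distrib)

lemma cinner_scale_left: "cinner (c *s x) y = cnj c * cinner x y"
  unfolding cinner_def by (simp add: sum_distrib_left algebra_simps)

lemma norm_smult: "norm (c *s x) = cmod c * norm (x::complex^'n)"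
  unfolding norm_vec_def by (simp add: L2_set_right_distrib norm_mult)

lemma real_smult: "(complex_of_real r) *s x = r *\<^sub>R x"
  by (simp add: vec_eq_iff complex_eq_iff)

lemma cinner_cs: "cmod (cinner x y) \<le> norm x * norm y"
proof (cases "cinner x y = 0")
  case True then show ?thesis by simp
next
  case False
  define a where "a = cinner x y"
  define x' where "x' = sgn a *s x"
  have "cinner x' y = cnj (sgn a) * a" unfolding x'_def a_def cinner_scale_left by simp
  also have "\<dots> = complex_of_real (cmod a)"
  proof -
    have n: "cmod a \<noteq> 0" using False a_def by simp
    have "sgn a = a / complex_of_real (cmod a)" by (simp add: sgn_div_norm scaleR_conv_of_real divide_inverse mult.commute)
    then have "cnj (sgn a) * a = (cnj a * a) / complex_of_real (cmod a)" by simp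
    also have "cnj a * a = complex_of_real ((cmod a)^2)"
      by (subst mult.commute) (rule complex_norm_square[symmetric])
    finally show ?thesis using n by (simp add: power2_eq_square)
  qed
  finally have "cmod a = inner x' y" using cinner_re[of x' y] by simp
  also have "\<dots> \<le> norm x' * norm y" by (rule norm_cauchy_schwarz)
  also have "norm x' = norm x" unfolding x'_def norm_smult using False a_def by (simp add: norm_sgn)
  finally show ?thesis unfolding a_def .
qed

lemma cinner_adj: "cinner (A *v x) y = cinner x (adjoint_mat A *v y)"
proof -
  have "cinner (A *v x) y = (\<Sum>i\<in>UNIV. \<Sum>j\<in>UNIV. cnj (A$i$j) * cnj (x$j) * y$i)"
    unfolding cinner_def matrix_vector_mult_def by (simp add: sum_distrib_right)
  also have "\<dots> = (\<Sum>j\<in>UNIV. \<Sum>i\<in>UNIV. cnj (A$i$j) * cnj (x$j) * y$i)"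
    by (rule sum.swap)
  also have "\<dots> = cinner x (adjoint_mat A *v y)"
    unfolding cinner_def adjoint_mat_def matrix_vector_mult_def
    by (simp add: sum_distrib_left mult.commute mult.left_commute)
  finally show ?thesis .
qed

lemma unitary_norm: assumes "unitary_mat A" shows "norm (A *v x) = norm x"
proof -
  have "cinner (A *v x) (A *v x) = cinner x x"
    using assms unfolding unitary_mat_def
    by (simp add: cinner_adj matrix_vector_mul_assoc)
  then have "(norm (A *v x))^2 = (norm x)^2" unfolding cinner_self of_real_eq_iff .
  then show ?thesis by (simp add: power2_eq_iff_nonneg)
qed

lemma cinner_tendsto:
  assumes "X \<longlonglongrightarrow> l"
  shows "(\<lambda>k. cinner p (X k)) \<longlonglongrightarrow> cinner p l"
  unfolding cinner_def
  by (intro tendsto_intros tendsto_vec_nth assms)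

lemma csub_subspace: assumes "csubspace F" shows "subspace F"
  using assms unfolding csubspace_def subspace_def by (metis real_smult)

lemma proj_char:
  assumes "csubspace F"
  shows "proj F x = closest_point F x" "proj F x \<in> F" "\<And>y. y \<in> F \<Longrightarrow> cinner y (x - proj F x) = 0"
proof -
  have sub: "subspace F" by (rule csub_subspace[OF assms])
  have cl: "closed F" by (rule closed_subspace[OF sub])
  have cv: "convex F" by (rule subspace_imp_convex[OF sub])
  have ne: "F \<noteq> {}" using assms unfolding csubspace_def by auto
  define p where "p = closest_point F x"
  have pF: "p \<in> F" unfolding p_def by (rule closest_point_in_set[OF cl ne])
  have rorth: "inner (x - p) y = 0" if "y \<in> F" for y
  proof -
    have "p + y \<in> F" "p - y \<in> F" using pF that sub by (auto intro: subspace_add subspace_diff)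
    from closest_point_dot[OF cv cl this(1), of x] closest_point_dot[OF cv cl this(2), of x]
    show ?thesis unfolding p_def[symmetric] by (simp add: inner_diff_right)
  qed
  have corth: "cinner y (x - p) = 0" if "y \<in> F" for y
  proof -
    have "\<i> *s y \<in> F" using assms that unfolding csubspace_def by auto
    have 1: "Re (cinner y (x - p)) = 0" using rorth[OF that] by (simp add: cinner_re inner_commute)
    have "Re (cinner (\<i> *s y) (x - p)) = 0" using rorth[OF \<open>\<i> *s y \<in> F\<close>] by (simp add: cinner_re inner_commute)
    then have 2: "Im (cinner y (x - p)) = 0" unfolding cinner_scale_left by simp
    from 1 2 show ?thesis by (simp add: complex_eq_iff)
  qed
  have uniq: "q = p" if "q \<in> F" "\<forall>y\<in>F. cinner y (x - q) = 0" for q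
  proof -
    have dF: "p - q \<in> F" using pF that(1) sub by (auto intro: subspace_diff)
    have "cinner (p - q) (p - q) = cinner (p - q) (x - q) - cinner (p - q) (x - p)"
      by (simp add: cinner_diff_right[symmetric])
    also have "\<dots> = 0" using that(2) dF corth[OF dF] by simp
    finally have "(norm (p - q))^2 = 0" unfolding cinner_self by simp
    then show ?thesis by simp
  qed
  have ex: "p \<in> F \<and> (\<forall>y\<in>F. cinner y (x - p) = 0)" using pF corth by blast
  have "proj F x = p" unfolding proj_def
    by (rule the_equality) (use ex uniq in blast)+
  then show "proj F x = closest_point F x" "proj F x \<in> F" "\<And>y. y \<in> F \<Longrightarrow> cinner y (x - proj F x) = 0"
    using p_def pF corth by auto
qed

lemma proj_bound:
  assumes "csubspace F" "\<psi> \<in> F" "norm \<psi> = 1"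
  shows "(cmod (cinner \<psi> z))^2 \<le> (norm (proj F z))^2"
proof -
  have "cinner \<psi> z = cinner \<psi> (proj F z) + cinner \<psi> (z - proj F z)"
    by (simp add: cinner_add_right[symmetric])
  also have "cinner \<psi> (z - proj F z) = 0" by (rule proj_char(3)[OF assms(1,2)])
  finally have "cmod (cinner \<psi> z) \<le> norm (proj F z)" using cinner_cs[of \<psi> "proj F z"] assms(3) by simp
  then show ?thesis by (simp add: power_mono)
qed

theorem proposition1:
  fixes U :: "'s::finite \<Rightarrow> complex^'n::finite^'n"
    and s0 :: "complex^'n"
    and F :: "(complex^'n) set"
    and w :: "nat \<Rightarrow> 's"
  assumes "norm s0 = 1"
    and "\<And>\<sigma>. unitary_mat (U \<sigma>)"
    and "csubspace F"
  shows "f_ND U s0 F w = f_IR U s0 F w"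
proof (rule antisym)
  define s where "s = run U s0 w"
  have ns: "norm (s n) = 1" for n
    unfolding s_def by (induction n) (simp_all add: assms(1) unitary_norm[OF assms(2)])
  show "f_ND U s0 F w \<le> f_IR U s0 F w"
    unfolding f_ND_def
  proof (intro SUP_least)
    fix \<psi> r assume \<psi>: "\<psi> \<in> {\<psi>. \<psi> \<in> F \<and> norm \<psi> = 1}" and r: "r \<in> {r::nat\<Rightarrow>nat. strict_mono r}"
    have "(INF i. ennreal ((cmod (cinner \<psi> (run U s0 w (r i))))\<^sup>2))
        \<le> (INF i. ennreal ((norm (proj F (run U s0 w (r i))))\<^sup>2))"
      by (rule INF_mono') (use \<psi> proj_bound[OF assms(3)] in \<open>auto intro: ennreal_leI\<close>)
    also have "\<dots> \<le> f_IR U s0 F w" unfolding f_IR_def using r by (rule SUP_upper)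
    finally show "(INF i. ennreal ((cmod (cinner \<psi> (run U s0 w (r i))))\<^sup>2)) \<le> f_IR U s0 F w" .
  qed
  show "f_IR U s0 F w \<le> f_ND U s0 F w"
    unfolding f_IR_def
  proof (intro SUP_least)
    fix r assume r: "r \<in> {r::nat\<Rightarrow>nat. strict_mono r}"
    define P where "P = proj F"
    define C where "C = (INF i. ennreal ((norm (P (s (r i))))\<^sup>2))"
    have "seq_compact (cball (0::complex^'n) 1)" by (rule compact_imp_seq_compact) simp
    moreover have "\<forall>n. (s \<circ> r) n \<in> cball 0 1" using ns by simp
    ultimately obtain l t where t: "strict_mono t" and lim: "(s \<circ> r \<circ> t) \<longlonglongrightarrow> l"
      unfolding seq_compact_def by blast
    have sub: "subspace F" by (rule csub_subspace[OF assms(3)])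
    have ne: "F \<noteq> {}" using assms(3) unfolding csubspace_def by auto
    have Pcp: "P = closest_point F" unfolding P_def using proj_char(1)[OF assms(3)] by auto
    have "isCont P l" unfolding Pcp
      by (rule continuous_at_closest_point[OF subspace_imp_convex[OF sub] closed_subspace[OF sub] ne])
    then have "(\<lambda>k. P ((s \<circ> r \<circ> t) k)) \<longlonglongrightarrow> P l" using lim by (rule isCont_tendsto_compose)
    then have alim: "(\<lambda>k. (norm (P (s (r (t k)))))^2) \<longlonglongrightarrow> (norm (P l))^2"
      by (intro tendsto_intros) simp
    have Cle: "C \<le> ennreal ((norm (P (s (r (t k)))))^2)" for k
      unfolding C_def by (rule INF_lower) simp
    show "(INF i. ennreal ((norm (proj F (run U s0 w (r i))))\<^sup>2)) \<le> f_ND U s0 F w"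
      unfolding s_def[symmetric] P_def[symmetric] C_def[symmetric]
    proof (rule dense_le)
      fix y assume "y < C"
      then obtain y' where yy': "y < y'" "y' < C" using dense by blast
      have y'fin: "y' < top" using yy'(2) Cle[of 0] by (simp add: order_less_le_trans)
      define yr' where "yr' = enn2real y'"
      have y'eq: "y' = ennreal yr'" using y'fin unfolding yr'_def by simp
      have yr'0: "0 \<le> yr'" unfolding yr'_def by simp
      define yr where "yr = enn2real y"
      have yeq: "y = ennreal yr" using yy' y'fin unfolding yr_def by simp
      have yr0: "0 \<le> yr" unfolding yr_def by simp
      have "yr < yr'" using yy'(1) unfolding yeq y'eq using yr0 yr'0 by (simp add: ennreal_less_iff)
      have "yr' \<le> (norm (P (s (r (t k)))))^2" for k
        using Cle[of k] yy'(2) unfolding y'eq by (simp add: ennreal_le_iff[symmetric] less_imp_le order_less_le_trans)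
      then have "yr' \<le> (norm (P l))^2"
        by (intro LIMSEQ_le_const[OF alim]) auto
      with \<open>yr < yr'\<close> have Lgt: "yr < (norm (P l))^2" by simp
      with yr0 have Pl0: "norm (P l) \<noteq> 0" by auto
      define \<psi> where "\<psi> = complex_of_real (1 / norm (P l)) *s P l"
      have \<psi>F: "\<psi> \<in> F" unfolding \<psi>_def P_def using proj_char(2)[OF assms(3)] assms(3)
        unfolding csubspace_def by auto
      have \<psi>n: "norm \<psi> = 1" unfolding \<psi>_def norm_smult using Pl0 by (simp add: norm_divide)
      have "cinner (P l) l = cinner (P l) (P l) + cinner (P l) (l - P l)"
        by (simp add: cinner_add_right[symmetric])
      also have "cinner (P l) (l - P l) = 0" unfolding P_def
        by (rule proj_char(3)[OF assms(3) proj_char(2)[OF assms(3)]])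
      finally have "cinner (P l) l = complex_of_real ((norm (P l))^2)" by (simp add: cinner_self)
      then have "cinner \<psi> l = complex_of_real (norm (P l))" unfolding \<psi>_def cinner_scale_left
        using Pl0 by (simp add: power2_eq_square)
      then have bl: "(cmod (cinner \<psi> l))^2 = (norm (P l))^2" by simp
      have "(\<lambda>k. (cmod (cinner \<psi> ((s \<circ> r \<circ> t) k)))^2) \<longlonglongrightarrow> (cmod (cinner \<psi> l))^2"
        by (intro tendsto_intros cinner_tendsto lim)
      then have "eventually (\<lambda>k. yr < (cmod (cinner \<psi> ((s \<circ> r \<circ> t) k)))^2) sequentially"
        using Lgt bl by (intro order_tendstoD(1)) auto
      then obtain N where N: "\<And>k. k \<ge> N \<Longrightarrow> yr < (cmod (cinner \<psi> (s (r (t k)))))^2"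
        unfolding eventually_sequentially by auto
      define r' where "r' = (\<lambda>i. r (t (i + N)))"
      have smr: "strict_mono r" using r by simp
      have r'm: "strict_mono r'" unfolding r'_def strict_mono_def
        using smr t by (simp add: strict_monoD)
      have "y \<le> (INF i. ennreal ((cmod (cinner \<psi> (run U s0 w (r' i))))\<^sup>2))"
        unfolding yeq s_def[symmetric] r'_def
        by (rule INF_greatest) (use N in \<open>auto intro: ennreal_leI less_imp_le\<close>)
      also have "\<dots> \<le> f_ND U s0 F w" unfolding f_ND_def
        by (rule SUP_upper2[where i=\<psi>]) (use \<psi>F \<psi>n r'm in \<open>auto intro: SUP_upper2[where i=r']\<close>)
      finally show "y \<le> f_ND U s0 F w" .
    qed
  qed
qed

end
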